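(* Let $0\le p_1<1/2<p_2\le 1$ and $c=\min\{1/2-p_1,\,p_2-1/2\}$. Let $n\ge 4$ and $\ell$ be integers with $(1/c^2)\ln n\le \ell\le n$, and let $a\le p_1\ell$, $b\ge p_2\ell$. Then $|\mathcal{W}(n,\ell,[a,b])|\ge 2^{n-1}$.
   Context: $\mathrm{wt}(\mathbf{x})$ denotes the number of ones of a binary sequence $\mathbf{x}$. For $\mathbf{x}=x_1\dots x_n\in\{0,1\}^n$ and $\ell\le n$, the windows of size $\ell$ are $x_i\dots x_{i+\ell-1}$, $1\le i\le n-\ell+1$. For reals $a\le b$, $\mathcal{W}(n,\ell,[a,b])$ is the set of $\mathbf{x}\in\{0,1\}^n$ all of whose windows of size $\ell$ have weight in $[a,b]$. $\ln$ is the natural logarithm. *)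

theory Defs
  imports Complex_Main
begin

text \<open>Binary sequences x = x_1 ... x_n are lists of booleans (True = 1).\<close>

definition wt :: "bool list \<Rightarrow> nat" where
  "wt x = length (filter id x)"

text \<open>Window of size l starting at position i+1 (0-indexed i), for 0 <= i <= n - l.\<close>
definition window :: "bool list \<Rightarrow> nat \<Rightarrow> nat \<Rightarrow> bool list" where
  "window x l i = take l (drop i x)"

definition W :: "nat \<Rightarrow> nat \<Rightarrow> real \<Rightarrow> real \<Rightarrow> bool list set" where
  "W n l a b = {x. length x = n \<and>
      (\<forall>i. i + l \<le> n \<longrightarrow> a \<le> real (wt (window x l i)) \<and> real (wt (window x l i)) \<le> b)}"

end

theory Submission
  imports Defs "HOL-Probability.Probability"
begin

lemma wt_Cons[simp]: "wt (b # y) = (if b then Suc (wt y) else wt y)"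
  by (simp add: wt_def)
lemma wt_Nil[simp]: "wt [] = 0" by (simp add: wt_def)

lemma card_wt: "card {y. length y = l \<and> wt y = k} = l choose k"
proof (induction l arbitrary: k)
  case 0
  have "{y. length y = 0 \<and> wt y = k} = (if k = 0 then {[]} else {})" by auto
  then show ?case by simp
next
  case (Suc l)
  show ?case
  proof (cases k)
    case 0
    have "{y. length y = Suc l \<and> wt y = k} = Cons False ` {y. length y = l \<and> wt y = 0}"
      using 0 by (auto simp: length_Suc_conv split: if_splits)
    then show ?thesis using Suc.IH[of 0] 0 by (simp add: card_image)
  next
    case (Suc j)
    have e: "{y. length y = Suc l \<and> wt y = k} = Cons True ` {y. length y = l \<and> wt y = j}
       \<union> Cons False ` {y. length y = l \<and> wt y = k}"
      using Suc by (auto simp: length_Suc_conv split: if_splits)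
    have f: "finite {y::bool list. length y = l \<and> wt y = m}" for m
      using finite_lists_length_eq[of "UNIV::bool set" l] by (auto intro: rev_finite_subset)
    have "card {y. length y = Suc l \<and> wt y = k} = card (Cons True ` {y. length y = l \<and> wt y = j})
       + card (Cons False ` {y. length y = l \<and> wt y = k})"
      unfolding e by (rule card_Un_disjoint) (use f in auto)
    also have "\<dots> = (l choose j) + (l choose k)" using Suc.IH by (simp add: card_image)
    finally show ?thesis using Suc by simp
  qed
qed

lemma finite_len: "finite {y::bool list. length y = l \<and> P y}"
  using finite_lists_length_eq[of "UNIV::bool set" l] by (auto intro: rev_finite_subset)

lemma card_wtP: "card {y. length y = l \<and> P (wt y)} = (\<Sum>k\<in>{k. k \<le> l \<and> P k}. l choose k)"
proof -
  have wtle: "length y = l \<Longrightarrow> wt y \<le> l" for y by (auto simp: wt_def)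
  have "{y. length y = l \<and> P (wt y)} = (\<Union>k\<in>{k. k \<le> l \<and> P k}. {y. length y = l \<and> wt y = k})"
    using wtle by auto
  hence "card {y. length y = l \<and> P (wt y)} = (\<Sum>k\<in>{k. k \<le> l \<and> P k}. card {y. length y = l \<and> wt y = k})"
    by (simp only:) (rule card_UN_disjoint, auto simp: finite_len)
  then show ?thesis by (simp add: card_wt)
qed

lemma bad_count:
  assumes l: "l > 0" and c: "c \<ge> 0"
  shows "real (card {y. length y = l \<and> c \<le> \<bar>real (wt y) / real l - 1/2\<bar>}) \<le> 2^l * (2 * exp (-2 * real l * c^2))"
proof -
  define S where "S = {k. k \<le> l \<and> c \<le> \<bar>real k / real l - 1/2\<bar>}"
  have fS: "finite S" unfolding S_def by auto
  have pm: "pmf (binomial_pmf l (1/2)) k = real (l choose k) / 2^l" if "k \<le> l" for k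
    using that by (simp add: power_add[symmetric] power_divide)
  have "real (card {y. length y = l \<and> c \<le> \<bar>real (wt y) / real l - 1/2\<bar>}) = (\<Sum>k\<in>S. real (l choose k))"
    unfolding S_def by (subst card_wtP) simp
  also have "\<dots> = 2^l * (\<Sum>k\<in>S. pmf (binomial_pmf l (1/2)) k)"
    unfolding sum_distrib_left by (intro sum.cong refl) (simp add: S_def pm del: pmf_binomial)
  also have "(\<Sum>k\<in>S. pmf (binomial_pmf l (1/2)) k) = measure_pmf.prob (binomial_pmf l (1/2)) S"
    using fS by (simp add: measure_measure_pmf_finite)
  also have "\<dots> \<le> measure_pmf.prob (binomial_pmf l (1/2)) {x. c \<le> \<bar>real x / real l - 1/2\<bar>}"
    by (rule measure_pmf.finite_measure_mono) (auto simp: S_def)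
  also have "\<dots> \<le> 2 * exp (-2 * real l * c^2)"
    using binomial_distribution.prob_abs_ge'[of "1/2" l c] l c by (simp add: binomial_distribution_def)
  finally show ?thesis by simp
qed

lemma card_len: "card {u::bool list. length u = i} = 2^i"
  using card_lists_length_eq[of "UNIV::bool set" i] by simp

lemma card_window:
  assumes "i + l \<le> n"
  shows "card {x::bool list. length x = n \<and> Q (window x l i)} = 2^(n-l) * card {y. length y = l \<and> Q y}"
proof -
  define D where "D = ({u::bool list. length u = i} \<times> {v::bool list. length v = n-i-l}) \<times> {y. length y = l \<and> Q y}"
  define f where "f = (\<lambda>((u::bool list,v::bool list),y::bool list). u @ y @ v)"
  have img: "{x::bool list. length x = n \<and> Q (window x l i)} = f ` D"
  proof (intro set_eqI iffI)
    fix x assume x: "x \<in> {x::bool list. length x = n \<and> Q (window x l i)}"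
    have "x = take i x @ take l (drop i x) @ drop l (drop i x)"
      by (metis append_take_drop_id)
    moreover have "((take i x, drop l (drop i x)), take l (drop i x)) \<in> D"
      using x assms by (auto simp: D_def window_def)
    ultimately show "x \<in> f ` D" unfolding f_def by (metis (no_types, lifting) case_prod_conv image_eqI)
  next
    fix x assume "x \<in> f ` D"
    then obtain u v y where "x = u @ y @ v" "length u = i" "length v = n-i-l" "length y = l" "Q y"
      by (auto simp: D_def f_def)
    then show "x \<in> {x::bool list. length x = n \<and> Q (window x l i)}"
      using assms by (auto simp: window_def)
  qed
  have inj: "inj_on f D"
    by (auto simp: inj_on_def D_def f_def)
  have "card (f ` D) = card D" by (rule card_image[OF inj])
  also have "card D = 2^i * 2^(n-i-l) * card {y. length y = l \<and> Q y}"
    by (simp add: D_def card_cartesian_product card_len)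
  also have "2^i * 2^(n-i-l) = (2::nat)^(n-l)"
    using assms by (simp add: power_add[symmetric])
  finally show ?thesis using img by simp
qed

theorem theorem4:
  fixes p1 p2 c a b :: real and n l :: nat
  assumes "0 \<le> p1" and "p1 < 1/2" and "1/2 < p2" and "p2 \<le> 1"
    and "c = min (1/2 - p1) (p2 - 1/2)"
    and "n \<ge> 4"
    and "(1 / c^2) * ln (real n) \<le> real l" and "l \<le> n"
    and "a \<le> p1 * real l" and "b \<ge> p2 * real l"
  shows "card (W n l a b) \<ge> 2 ^ (n - 1)"
proof -
  note A = assms
  have c0: "c > 0" using A by auto
  have c1: "c \<le> 1/2" using A(1,5) by linarith
  have lnpos: "ln (real n) > 0" using A by simp
  have "0 < (1 / c^2) * ln (real n)" using c0 lnpos by simp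
  hence lpos: "l > 0" using A(7) by linarith
  have lc: "ln (real n) \<le> real l * c^2"
  proof -
    have "(1 / c^2) * ln (real n) * c^2 \<le> real l * c^2"
      using A(7) c0 by (intro mult_right_mono) auto
    thus ?thesis using c0 by simp
  qed
  have ex: "exp (-2 * real l * c^2) \<le> 1 / (real n)^2"
  proof -
    have "exp (-2 * real l * c^2) \<le> exp (-2 * ln (real n))" using lc by simp
    also have "exp (-2 * ln (real n)) = 1 / (real n)^2"
    proof -
      have "exp (2 * ln (real n)) = (real n)^2"
      proof -
        have "exp (2 * ln (real n)) = exp (ln (real n)) * exp (ln (real n))"
          by (subst mult_2) (rule exp_add)
        thus ?thesis using A(6) by (simp add: power2_eq_square)
      qed
      moreover have "exp (-2 * ln (real n)) = inverse (exp (2 * ln (real n)))"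
        using exp_minus[of "2 * ln (real n)"] by simp
      ultimately show ?thesis by (simp add: divide_inverse)
    qed
    finally show ?thesis .
  qed
  define Q where "Q = (\<lambda>y. c \<le> \<bar>real (wt y) / real l - 1/2\<bar>)"
  define B where "B = (\<lambda>i. {x::bool list. length x = n \<and> Q (window x l i)})"
  define L where "L = {x::bool list. length x = n}"
  have WL: "W n l a b \<subseteq> L" by (auto simp: W_def L_def)
  have fL: "finite L" unfolding L_def using finite_len[of n "\<lambda>_. True"] by simp
  have cL: "card L = 2^n" unfolding L_def by (rule card_len)
  have bad: "L - W n l a b \<subseteq> (\<Union>i\<in>{..n-l}. B i)"
  proof
    fix x assume x: "x \<in> L - W n l a b"
    then obtain i where i: "i + l \<le> n" and
      w: "\<not> (a \<le> real (wt (window x l i)) \<and> real (wt (window x l i)) \<le> b)"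
      by (auto simp: W_def L_def)
    define k where "k = real (wt (window x l i))"
    have "Q (window x l i)"
    proof (cases "k < a")
      case True
      have "p1 * real l \<le> (1/2 - c) * real l" using A(5) by (intro mult_right_mono) auto
      hence "k < (1/2 - c) * real l" using True A(9) by linarith
      hence "k / real l < 1/2 - c" using lpos by (simp add: divide_less_eq)
      thus ?thesis unfolding Q_def k_def by linarith
    next
      case False
      hence "k > b" using w k_def by auto
      have "(1/2 + c) * real l \<le> p2 * real l" using A(5) by (intro mult_right_mono) auto
      hence "k > (1/2 + c) * real l" using \<open>k > b\<close> A(10) by linarith
      hence "k / real l > 1/2 + c" using lpos by (simp add: less_divide_eq)
      thus ?thesis unfolding Q_def k_def by linarith
    qed
    thus "x \<in> (\<Union>i\<in>{..n-l}. B i)" using x i by (auto simp: B_def L_def)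
  qed
  have cB: "real (card (B i)) \<le> 2^n * (2 / (real n)^2)" if "i \<in> {..n-l}" for i
  proof -
    have "card (B i) = 2^(n-l) * card {y. length y = l \<and> Q y}"
      unfolding B_def using that A(8) by (intro card_window) auto
    hence "real (card (B i)) = 2^(n-l) * real (card {y. length y = l \<and> Q y})" by simp
    also have "\<dots> \<le> 2^(n-l) * (2^l * (2 * exp (-2 * real l * c^2)))"
      unfolding Q_def by (intro mult_left_mono bad_count) (use lpos c0 in auto)
    also have "\<dots> \<le> 2^(n-l) * (2^l * (2 * (1 / (real n)^2)))"
      using ex by (intro mult_left_mono) auto
    also have "\<dots> = 2^n * (2 / (real n)^2)"
      using A(8) by (simp add: power_add[symmetric])
    finally show ?thesis .
  qed
  have "real (card (L - W n l a b)) \<le> real (card (\<Union>i\<in>{..n-l}. B i))"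
    using bad by (intro of_nat_mono card_mono) (auto simp: B_def finite_len)
  also have "\<dots> \<le> real (\<Sum>i\<in>{..n-l}. card (B i))"
    using card_UN_le[of "{..n-l}" B] by (intro of_nat_mono) auto
  also have "\<dots> = (\<Sum>i\<in>{..n-l}. real (card (B i)))" by simp
  also have "\<dots> \<le> (\<Sum>i\<in>{..n-l}. 2^n * (2 / (real n)^2))"
    by (intro sum_mono cB)
  also have "\<dots> = real (n - l + 1) * (2^n * (2 / (real n)^2))" by simp
  also have "\<dots> \<le> real n * (2^n * (2 / (real n)^2))"
    using lpos A(8) by (intro mult_right_mono) auto
  also have "\<dots> = 2^n * (2 / real n)" using A(6) by (simp add: power2_eq_square)
  also have "\<dots> \<le> 2^n * (1/2)" using A(6) by (intro mult_left_mono) auto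
  finally have hb: "real (card (L - W n l a b)) \<le> 2^n / 2" by simp
  have "card (L - W n l a b) = card L - card (W n l a b)"
    using WL fL by (simp add: card_Diff_subset finite_subset)
  moreover have "card (W n l a b) \<le> card L" using WL fL by (simp add: card_mono)
  ultimately have "real (card (W n l a b)) = 2^n - real (card (L - W n l a b))"
    using cL by simp
  also have "\<dots> \<ge> 2^n - 2^n / 2" using hb by simp
  finally have "real (card (W n l a b)) \<ge> 2^n / 2" by simp
  moreover have "(2::real)^n / 2 = 2^(n-1)"
    using A(6) by (simp add: power_diff)
  ultimately have "real (card (W n l a b)) \<ge> real (2^(n-1))" by simp
  thus ?thesis by linarith
qed

end
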